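(* For every integer $k\ge 3$, $M_k(3)\ge \frac{3}{4}\,2^k+2$.
   Context: All graphs are finite and simple. A path $v_1,\ldots,v_r$ in a graph $G$ is degree-monotone if $\deg_G(v_1)\le\cdots\le\deg_G(v_r)$; its order is $r$. Let $mp(G)$ be the maximum order of a degree-monotone path in $G$. For a $k$-edge-coloring of $K_n$ with colors $1,\ldots,k$, let $G_j$ be the spanning subgraph consisting of the edges colored $j$ (degrees taken in $G_j$). $M_k(m)$ is the minimum integer $M$ such that for every $n\ge M$ and every $k$-edge-coloring of $K_n$ there is some $j$ with $mp(G_j)\ge m$. *)

theory Defs
  imports Complex_Main
begin

text \<open>A finite simple graph is given by a finite vertex set V and a symmetric,
irreflexive adjacency relation E (only its restriction to V matters).\<close>

definition gdeg :: "'a set \<Rightarrow> ('a \<Rightarrow> 'a \<Rightarrow> bool) \<Rightarrow> 'a \<Rightarrow> nat" where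
  "gdeg V E v = card {w \<in> V. E v w}"

definition is_path :: "'a set \<Rightarrow> ('a \<Rightarrow> 'a \<Rightarrow> bool) \<Rightarrow> 'a list \<Rightarrow> bool" where
  "is_path V E p \<longleftrightarrow> p \<noteq> [] \<and> distinct p \<and> set p \<subseteq> V \<and>
     (\<forall>i. Suc i < length p \<longrightarrow> E (p ! i) (p ! Suc i))"

definition deg_monotone_path :: "'a set \<Rightarrow> ('a \<Rightarrow> 'a \<Rightarrow> bool) \<Rightarrow> 'a list \<Rightarrow> bool" where
  "deg_monotone_path V E p \<longleftrightarrow> is_path V E p \<and> sorted (map (gdeg V E) p)"

definition mp :: "'a set \<Rightarrow> ('a \<Rightarrow> 'a \<Rightarrow> bool) \<Rightarrow> nat" where
  "mp V E = Max (insert 0 {length p | p. deg_monotone_path V E p})"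

text \<open>K_n on vertex set {0..<n}; a k-edge-colouring with colours 1..k is a symmetric
function on pairs of distinct vertices with values in {1..k}.\<close>
definition edge_coloring :: "nat \<Rightarrow> nat \<Rightarrow> (nat \<Rightarrow> nat \<Rightarrow> nat) \<Rightarrow> bool" where
  "edge_coloring k n c \<longleftrightarrow>
     (\<forall>u<n. \<forall>v<n. u \<noteq> v \<longrightarrow> c u v = c v u \<and> c u v \<in> {1..k})"

definition color_class :: "nat \<Rightarrow> (nat \<Rightarrow> nat \<Rightarrow> nat) \<Rightarrow> nat \<Rightarrow> nat \<Rightarrow> nat \<Rightarrow> bool" where
  "color_class n c j u v \<longleftrightarrow> u < n \<and> v < n \<and> u \<noteq> v \<and> c u v = j"

text \<open>M is admissible for (k,m): for every n \<ge> M and every k-edge-colouring of K_n,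
some colour class has mp \<ge> m. M_k(m) is the least admissible M.\<close>
definition admissible :: "nat \<Rightarrow> nat \<Rightarrow> nat \<Rightarrow> bool" where
  "admissible k m M \<longleftrightarrow>
     (\<forall>n\<ge>M. \<forall>c. edge_coloring k n c \<longrightarrow>
        (\<exists>j\<in>{1..k}. mp {0..<n} (color_class n c j) \<ge> m))"

end

theory Submission
  imports Defs
begin

definition dg :: "nat \<Rightarrow> (nat \<Rightarrow> nat \<Rightarrow> nat) \<Rightarrow> nat \<Rightarrow> nat \<Rightarrow> nat" where
  "dg n c x j = card {y. y < n \<and> y \<noteq> x \<and> c x y = j}"

definition nomono :: "nat \<Rightarrow> (nat \<Rightarrow> nat \<Rightarrow> nat) \<Rightarrow> bool" where
  "nomono n c \<longleftrightarrow> (\<forall>u<n. \<forall>v<n. \<forall>w<n. u \<noteq> v \<longrightarrow> v \<noteq> w \<longrightarrow> u \<noteq> w \<longrightarrow> c u v = c v w \<longrightarrow>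
     \<not> (dg n c u (c v w) \<le> dg n c v (c v w) \<and> dg n c v (c v w) \<le> dg n c w (c v w)))"

definition dgl :: "nat \<Rightarrow> (nat \<Rightarrow> nat \<Rightarrow> nat) \<Rightarrow> nat \<Rightarrow> nat \<Rightarrow> nat" where
  "dgl n c x j = length (filter (\<lambda>y. y \<noteq> x \<and> c x y = j) [0..<n])"

lemma dg_dgl: "dg n c x j = dgl n c x j"
proof -
  have "{y. y < n \<and> y \<noteq> x \<and> c x y = j} = set (filter (\<lambda>y. y \<noteq> x \<and> c x y = j) [0..<n])" by auto
  moreover have "card (set (filter (\<lambda>y. y \<noteq> x \<and> c x y = j) [0..<n])) = length (filter (\<lambda>y. y \<noteq> x \<and> c x y = j) [0..<n])"
    by (rule distinct_card) simp
  ultimately show ?thesis unfolding dg_def dgl_def by simp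
qed

definition nomonol :: "nat \<Rightarrow> (nat \<Rightarrow> nat \<Rightarrow> nat) \<Rightarrow> bool" where
  "nomonol n c \<longleftrightarrow> (\<forall>u\<in>set [0..<n]. \<forall>v\<in>set [0..<n]. \<forall>w\<in>set [0..<n]. u \<noteq> v \<longrightarrow> v \<noteq> w \<longrightarrow> u \<noteq> w \<longrightarrow> c u v = c v w \<longrightarrow>
     \<not> (dgl n c u (c v w) \<le> dgl n c v (c v w) \<and> dgl n c v (c v w) \<le> dgl n c w (c v w)))"

lemma nomono_l: "nomono n c = nomonol n c"
  unfolding nomono_def nomonol_def dg_dgl by auto

definition tab6 :: "nat list list" where "tab6 = [[1, 2, 1, 1, 3, 1], [2, 1, 1, 1, 1, 3], [1, 1, 1, 2, 3, 3], [1, 1, 2, 1, 3, 3], [3, 1, 3, 3, 1, 2], [1, 3, 3, 3, 2, 1]]"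
definition tab7 :: "nat list list" where "tab7 = [[1, 2, 3, 3, 1, 1, 1], [2, 1, 3, 3, 1, 1, 1], [3, 3, 1, 1, 2, 2, 3], [3, 3, 1, 1, 2, 2, 3], [1, 1, 2, 2, 1, 3, 2], [1, 1, 2, 2, 3, 1, 2], [1, 1, 3, 3, 2, 2, 1]]"

definition ec_l :: "nat \<Rightarrow> nat \<Rightarrow> (nat \<Rightarrow> nat \<Rightarrow> nat) \<Rightarrow> bool" where
  "ec_l k n c \<longleftrightarrow> (\<forall>u\<in>set [0..<n]. \<forall>v\<in>set [0..<n]. u \<noteq> v \<longrightarrow> c u v = c v u \<and> 1 \<le> c u v \<and> c u v \<le> k)"

lemma ec_l: "edge_coloring k n c = ec_l k n c"
  unfolding edge_coloring_def ec_l_def by auto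

lemma base7: "edge_coloring 3 7 (\<lambda>u v. tab7 ! u ! v) \<and> nomono 7 (\<lambda>u v. tab7 ! u ! v)"
  unfolding ec_l nomono_l by code_simp
lemma base6: "edge_coloring 3 6 (\<lambda>u v. tab6 ! u ! v) \<and> nomono 6 (\<lambda>u v. tab6 ! u ! v)"
  unfolding ec_l nomono_l by code_simp

definition comb :: "nat \<Rightarrow> (nat \<Rightarrow> nat \<Rightarrow> nat) \<Rightarrow> (nat \<Rightarrow> nat \<Rightarrow> nat) \<Rightarrow> nat \<Rightarrow> nat \<Rightarrow> nat \<Rightarrow> nat" where
  "comb a c1 c2 k u v = (if u < a \<and> v < a then c1 u v else if a \<le> u \<and> a \<le> v then c2 (u - a) (v - a) else k)"

lemma comb_ec:
  assumes "edge_coloring k a c1" "edge_coloring k b c2"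
  shows "edge_coloring (Suc k) (a+b) (comb a c1 c2 (Suc k))"
  unfolding edge_coloring_def
proof (intro allI impI)
  fix u v assume h: "u < a + b" "v < a + b" "u \<noteq> v"
  show "comb a c1 c2 (Suc k) u v = comb a c1 c2 (Suc k) v u \<and> comb a c1 c2 (Suc k) u v \<in> {1..Suc k}"
  proof (cases "u < a \<and> v < a")
    case True
    then have "c1 u v = c1 v u \<and> c1 u v \<in> {1..k}" using assms(1) h unfolding edge_coloring_def by blast
    then show ?thesis using True by (simp add: comb_def)
  next
    case F1: False
    show ?thesis
    proof (cases "a \<le> u \<and> a \<le> v")
      case True
      then have "u - a < b" "v - a < b" "u - a \<noteq> v - a" using h by auto
      then have "c2 (u-a) (v-a) = c2 (v-a) (u-a) \<and> c2 (u-a) (v-a) \<in> {1..k}"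
        using assms(2) unfolding edge_coloring_def by blast
      then show ?thesis using True F1 by (simp add: comb_def)
    next
      case False
      then show ?thesis using F1 by (auto simp: comb_def)
    qed
  qed
qed

lemma dg_A:
  assumes "edge_coloring k a c1" "x < a" "j \<noteq> Suc k"
  shows "dg (a+b) (comb a c1 c2 (Suc k)) x j = dg a c1 x j"
  unfolding dg_def
  by (rule arg_cong[where f=card]) (use assms in \<open>auto simp: comb_def\<close>)

lemma dg_B:
  assumes "a \<le> x" "x < a + b" "j \<noteq> Suc k"
  shows "dg (a+b) (comb a c1 c2 (Suc k)) x j = dg b c2 (x - a) j"
proof -
  have "{y. y < a+b \<and> y \<noteq> x \<and> comb a c1 c2 (Suc k) x y = j} = (\<lambda>z. z + a) ` {z. z < b \<and> z \<noteq> x - a \<and> c2 (x - a) z = j}"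
  proof (rule set_eqI, rule iffI)
    fix y assume "y \<in> {y. y < a+b \<and> y \<noteq> x \<and> comb a c1 c2 (Suc k) x y = j}"
    then have y: "y < a+b" "y \<noteq> x" "comb a c1 c2 (Suc k) x y = j" by auto
    have ay: "a \<le> y"
    proof (rule ccontr)
      assume "\<not> a \<le> y"
      then have "comb a c1 c2 (Suc k) x y = Suc k" using assms(1) unfolding comb_def by simp
      then show False using y(3) assms(3) by simp
    qed
    then have "c2 (x - a) (y - a) = j" using y(3) assms(1) unfolding comb_def by simp
    moreover have "y - a < b" "y - a \<noteq> x - a" using ay y assms by auto
    ultimately have "y - a \<in> {z. z < b \<and> z \<noteq> x - a \<and> c2 (x - a) z = j}" by simp
    moreover have "y = (y - a) + a" using ay by simp
    ultimately show "y \<in> (\<lambda>z. z + a) ` {z. z < b \<and> z \<noteq> x - a \<and> c2 (x - a) z = j}"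
      by (rule rev_image_eqI)
  next
    fix y assume "y \<in> (\<lambda>z. z + a) ` {z. z < b \<and> z \<noteq> x - a \<and> c2 (x - a) z = j}"
    then obtain z where z: "y = z + a" "z < b" "z \<noteq> x - a" "c2 (x - a) z = j" by auto
    have "comb a c1 c2 (Suc k) x y = c2 (x - a) z" using z(1) assms(1) unfolding comb_def by simp
    moreover have "y < a + b" "y \<noteq> x" using z assms by auto
    ultimately show "y \<in> {y. y < a+b \<and> y \<noteq> x \<and> comb a c1 c2 (Suc k) x y = j}"
      using z(4) by simp
  qed
  moreover have "card ((\<lambda>z. z + a) ` {z. z < b \<and> z \<noteq> x - a \<and> c2 (x - a) z = j})
      = card {z. z < b \<and> z \<noteq> x - a \<and> c2 (x - a) z = j}"
    by (rule card_image) (simp add: inj_on_def)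
  ultimately show ?thesis unfolding dg_def by simp
qed

lemma dg_kA:
  assumes "edge_coloring k a c1" "x < a"
  shows "dg (a+b) (comb a c1 c2 (Suc k)) x (Suc k) = b"
proof -
  have "{y. y < a+b \<and> y \<noteq> x \<and> comb a c1 c2 (Suc k) x y = Suc k} = {a..<a+b}"
  proof (rule set_eqI, rule iffI)
    fix y assume "y \<in> {y. y < a+b \<and> y \<noteq> x \<and> comb a c1 c2 (Suc k) x y = Suc k}"
    then have y: "y < a+b" "y \<noteq> x" "comb a c1 c2 (Suc k) x y = Suc k" by auto
    show "y \<in> {a..<a+b}"
    proof (rule ccontr)
      assume "y \<notin> {a..<a+b}"
      then have "y < a" using y(1) by auto
      then have "c1 x y = Suc k" using y(3) assms(2) unfolding comb_def by simp
      moreover have "c1 x y \<in> {1..k}" using assms(1) \<open>y < a\<close> assms(2) y(2)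
        unfolding edge_coloring_def by blast
      ultimately show False by simp
    qed
  next
    fix y assume "y \<in> {a..<a+b}"
    then have "a \<le> y" "y < a + b" by auto
    then show "y \<in> {y. y < a+b \<and> y \<noteq> x \<and> comb a c1 c2 (Suc k) x y = Suc k}"
      using assms(2) unfolding comb_def by simp
  qed
  then show ?thesis unfolding dg_def by simp
qed

lemma dg_kB:
  assumes "edge_coloring k b c2" "a \<le> x" "x < a + b"
  shows "dg (a+b) (comb a c1 c2 (Suc k)) x (Suc k) = a"
proof -
  have "{y. y < a+b \<and> y \<noteq> x \<and> comb a c1 c2 (Suc k) x y = Suc k} = {0..<a}"
  proof (rule set_eqI, rule iffI)
    fix y assume "y \<in> {y. y < a+b \<and> y \<noteq> x \<and> comb a c1 c2 (Suc k) x y = Suc k}"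
    then have y: "y < a+b" "y \<noteq> x" "comb a c1 c2 (Suc k) x y = Suc k" by auto
    show "y \<in> {0..<a}"
    proof (rule ccontr)
      assume "y \<notin> {0..<a}"
      then have ay: "a \<le> y" by auto
      then have "c2 (x - a) (y - a) = Suc k" using y(3) assms(2) unfolding comb_def by simp
      moreover have "x - a < b" "y - a < b" "x - a \<noteq> y - a" using ay y assms by auto
      then have "c2 (x - a) (y - a) \<in> {1..k}" using assms(1) unfolding edge_coloring_def by blast
      ultimately show False by simp
    qed
  next
    fix y assume "y \<in> {0..<a}"
    then have "y < a" by auto
    then show "y \<in> {y. y < a+b \<and> y \<noteq> x \<and> comb a c1 c2 (Suc k) x y = Suc k}"
      using assms(2,3) unfolding comb_def by simp
  qed
  then show ?thesis unfolding dg_def by simp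
qed

lemma comb_nomono:
  assumes ec1: "edge_coloring k a c1" and ec2: "edge_coloring k b c2"
    and nm1: "nomono a c1" and nm2: "nomono b c2" and ab: "a \<noteq> b"
  shows "nomono (a+b) (comb a c1 c2 (Suc k))"
  unfolding nomono_def
proof (intro allI impI notI)
  fix u v w
  let ?c = "comb a c1 c2 (Suc k)"
  assume h: "u < a+b" "v < a+b" "w < a+b" "u \<noteq> v" "v \<noteq> w" "u \<noteq> w" "?c u v = ?c v w"
    and m: "dg (a+b) ?c u (?c v w) \<le> dg (a+b) ?c v (?c v w) \<and> dg (a+b) ?c v (?c v w) \<le> dg (a+b) ?c w (?c v w)"
  have r1: "c1 x y \<noteq> Suc k" if "x < a" "y < a" "x \<noteq> y" for x y
    using ec1 that unfolding edge_coloring_def by fastforce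
  have r2: "c2 x y \<noteq> Suc k" if "x < b" "y < b" "x \<noteq> y" for x y
    using ec2 that unfolding edge_coloring_def by fastforce
  show False
  proof (cases "?c v w = Suc k")
    case True
    then have cu: "?c u v = Suc k" using h by simp
    show ?thesis
    proof (cases "v < a")
      case True
      then have "a \<le> u" "a \<le> w"
        using cu \<open>?c v w = Suc k\<close> h r1[of u v] r1[of v w] by (auto simp: comb_def split: if_splits)
      then have "dg (a+b) ?c u (Suc k) = a" "dg (a+b) ?c w (Suc k) = a" "dg (a+b) ?c v (Suc k) = b"
        using dg_kB[OF ec2] dg_kA[OF ec1] h True by auto
      then show False using m \<open>?c v w = Suc k\<close> ab by simp
    next
      case False
      have "\<not> a \<le> u"
      proof
        assume "a \<le> u"
        then have "?c u v = c2 (u-a) (v-a)" using False by (simp add: comb_def)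
        moreover have "u - a < b" "v - a < b" "u - a \<noteq> v - a" using h False \<open>a \<le> u\<close> by auto
        ultimately show False using r2 cu by metis
      qed
      moreover have "\<not> a \<le> w"
      proof
        assume "a \<le> w"
        then have "?c v w = c2 (v-a) (w-a)" using False by (simp add: comb_def)
        moreover have "w - a < b" "v - a < b" "v - a \<noteq> w - a" using h False \<open>a \<le> w\<close> by auto
        ultimately show False using r2 \<open>?c v w = Suc k\<close> by metis
      qed
      ultimately have "u < a" "w < a" by auto
      then have "dg (a+b) ?c u (Suc k) = b" "dg (a+b) ?c w (Suc k) = b" "dg (a+b) ?c v (Suc k) = a"
        using dg_kB[OF ec2] dg_kA[OF ec1] h False by auto
      then show False using m \<open>?c v w = Suc k\<close> ab by simp
    qed
  next
    case False
    let ?j = "?c v w"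
    have sides: "(u < a \<and> v < a \<and> w < a) \<or> (a \<le> u \<and> a \<le> v \<and> a \<le> w)"
      using False h by (auto simp: comb_def split: if_splits)
    then show ?thesis
    proof
      assume s: "u < a \<and> v < a \<and> w < a"
      then have "?c u v = c1 u v" "?c v w = c1 v w" by (auto simp: comb_def)
      moreover have "dg (a+b) ?c x ?j = dg a c1 x ?j" if "x < a" for x
        using dg_A[OF ec1 that False] .
      ultimately show False using nm1 s h m unfolding nomono_def by metis
    next
      assume s: "a \<le> u \<and> a \<le> v \<and> a \<le> w"
      then have e: "?c u v = c2 (u-a) (v-a)" "?c v w = c2 (v-a) (w-a)" by (auto simp: comb_def)
      have d: "dg (a+b) ?c x ?j = dg b c2 (x - a) ?j" if "a \<le> x" "x < a+b" for x
        using dg_B[OF that False] .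
      have "u - a < b" "v - a < b" "w - a < b" "u - a \<noteq> v - a" "v - a \<noteq> w - a" "u - a \<noteq> w - a"
        using s h by auto
      then show False using nm2 e h m d[of u] d[of v] d[of w] s unfolding nomono_def by metis
    qed
  qed
qed


definition GC :: "nat \<Rightarrow> nat \<Rightarrow> bool" where
  "GC k n \<longleftrightarrow> (\<exists>c. edge_coloring k n c \<and> nomono n c)"

lemma ec_lift: "edge_coloring k n c \<Longrightarrow> k \<le> k' \<Longrightarrow> edge_coloring k' n c"
  unfolding edge_coloring_def by fastforce

lemma GC_lift: "GC k n \<Longrightarrow> k \<le> k' \<Longrightarrow> GC k' n"
  unfolding GC_def using ec_lift by blast

lemma GC_comb: "GC k a \<Longrightarrow> GC k b \<Longrightarrow> a \<noteq> b \<Longrightarrow> GC (Suc k) (a+b)"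
  unfolding GC_def using comb_ec comb_nomono by blast

lemma GC1: assumes "n \<le> 2" shows "GC 1 n"
proof -
  have "edge_coloring 1 n (\<lambda>_ _. 1)" unfolding edge_coloring_def by auto
  moreover have "nomono n (\<lambda>_ _. 1)" unfolding nomono_def using assms by presburger
  ultimately show ?thesis unfolding GC_def by blast
qed

lemma GC2: assumes "n \<le> 3" shows "GC 2 n"
proof (cases "n \<le> 2")
  case True then show ?thesis using GC1 GC_lift by fastforce
next
  case False
  then have "n = 2 + 1" using assms by simp
  have "GC (Suc 1) (2+1)" by (rule GC_comb[OF GC1 GC1]) auto
  moreover have "Suc 1 = (2::nat)" by simp
  ultimately show ?thesis using \<open>n = 2 + 1\<close> by metis
qed

lemma GC3: assumes "n \<le> 7" shows "GC 3 n"
proof -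
  have g6: "GC 3 6" using base6 unfolding GC_def by blast
  have g7: "GC 3 7" using base7 unfolding GC_def by blast
  have g4: "GC 3 4" using GC_comb[of 2 3 1] GC2 by simp
  have g5: "GC 3 5" using GC_comb[of 2 3 2] GC2 by simp
  have "n \<le> 3 \<or> n = 4 \<or> n = 5 \<or> n = 6 \<or> n = 7" using assms by auto
  then show ?thesis using g4 g5 g6 g7 GC2 GC_lift[of 2 n 3] by auto
qed

lemma GC_main: "n \<le> 6 * 2 ^ m + 1 \<Longrightarrow> GC (m + 3) n"
proof (induction m arbitrary: n)
  case 0
  then show ?case using GC3 by simp
next
  case (Suc m)
  show ?case
  proof (cases "n \<le> 6 * 2 ^ m + 1")
    case True
    then show ?thesis using Suc.IH GC_lift[of "m+3" n "Suc m + 3"] by simp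
  next
    case False
    define a :: nat where "a = 6 * 2 ^ m + 1"
    define b :: nat where "b = n - a"
    have ab: "n = a + b" "b < a" using False Suc.prems unfolding a_def b_def by auto
    have "GC (m+3) a" "GC (m+3) b" using Suc.IH ab unfolding a_def by auto
    then have "GC (Suc (m+3)) (a+b)" using GC_comb[of "m+3" a b] ab(2) by simp
    then show ?thesis using ab by simp
  qed
qed

lemma gdeg_dg: "x < n \<Longrightarrow> gdeg {0..<n} (color_class n c j) x = dg n c x j"
  unfolding gdeg_def dg_def color_class_def
  by (rule arg_cong[where f=card]) auto

lemma mp_small:
  assumes nm: "nomono n c"
  shows "mp {0..<n} (color_class n c j) < 3"
proof (rule ccontr)
  let ?E = "color_class n c j"
  let ?S = "{length p | p. deg_monotone_path {0..<n} ?E p}"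
  assume "\<not> mp {0..<n} ?E < 3"
  then have ge: "Max (insert 0 ?S) \<ge> 3" unfolding mp_def by simp
  have "?S \<subseteq> {..n}"
  proof
    fix x assume "x \<in> ?S"
    then obtain p where "x = length p" "deg_monotone_path {0..<n} ?E p" by blast
    then have "distinct p" "set p \<subseteq> {0..<n}" "x = length p"
      unfolding deg_monotone_path_def is_path_def by auto
    then have "x = card (set p)" "card (set p) \<le> card {0..<n}"
      using distinct_card card_mono by (metis, blast)
    then show "x \<in> {..n}" by simp
  qed
  then have "finite ?S" using finite_subset by blast
  then obtain x where "x \<in> insert 0 ?S" "x \<ge> 3" using ge Max_ge_iff[of "insert 0 ?S" 3] by auto
  then obtain p where p: "deg_monotone_path {0..<n} ?E p" "length p \<ge> 3" by auto
  then have d0: "distinct p" "set p \<subseteq> {0..<n}" "\<And>i. Suc i < length p \<Longrightarrow> ?E (p!i) (p!Suc i)"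
    and s: "sorted (map (gdeg {0..<n} ?E) p)"
    unfolding deg_monotone_path_def is_path_def by auto
  have d: "distinct p" "set p \<subseteq> {0..<n}" "?E (p!0) (p!1)" "?E (p!1) (p!2)"
    using d0(1,2) d0(3)[of 0] d0(3)[of 1] p(2) by (simp_all add: numeral_2_eq_2)
  have lt: "p!0 < n" "p!1 < n" "p!2 < n" proof -
    have "p!i < n" if "i < 3" for i
    proof -
      have "p!i \<in> set p" using p(2) that by (intro nth_mem) simp
      then show ?thesis using d(2) by auto
    qed
    then show "p!0 < n" "p!1 < n" "p!2 < n" by auto
  qed
  have ne: "p!0 \<noteq> p!1" "p!1 \<noteq> p!2" "p!0 \<noteq> p!2" using d(1) p(2) nth_eq_iff_index_eq by fastforce+
  have cj: "c (p!0) (p!1) = j" "c (p!1) (p!2) = j" using d(3,4) unfolding color_class_def by auto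
  have sw: "sorted_wrt (\<lambda>x y. gdeg {0..<n} ?E x \<le> gdeg {0..<n} ?E y) p"
    using s by (simp add: sorted_map)
  have "gdeg {0..<n} ?E (p!0) \<le> gdeg {0..<n} ?E (p!1)"
    using sorted_wrt_nth_less[OF sw, of 0 1] p(2) by simp
  moreover have "gdeg {0..<n} ?E (p!1) \<le> gdeg {0..<n} ?E (p!2)"
    using sorted_wrt_nth_less[OF sw, of 1 2] p(2) by simp
  ultimately have "gdeg {0..<n} ?E (p!0) \<le> gdeg {0..<n} ?E (p!1)" "gdeg {0..<n} ?E (p!1) \<le> gdeg {0..<n} ?E (p!2)"
    by auto
  then have "dg n c (p!0) j \<le> dg n c (p!1) j" "dg n c (p!1) j \<le> dg n c (p!2) j"
    using p(2) gdeg_dg lt by auto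
  then show False using nm lt ne cj unfolding nomono_def by metis
qed

theorem lemma3p7:
  fixes k M :: nat
  assumes "k \<ge> 3" and "admissible k 3 M"
  shows "real M \<ge> 3 / 4 * 2 ^ k + 2"
proof (rule ccontr)
  assume h: "\<not> real M \<ge> 3 / 4 * 2 ^ k + 2"
  obtain m where k: "k = m + 3" using assms(1) by (metis add.commute le_Suc_ex)
  have "(2::real) ^ k = 8 * 2 ^ m" unfolding k by (simp add: power_add)
  then have "real M < real (6 * 2 ^ m + 2)" using h by simp
  then have Mle: "M \<le> 6 * 2 ^ m + 1" by linarith
  define N :: nat where "N = 6 * 2 ^ m + 1"
  have "GC (m+3) N" by (rule GC_main) (simp add: N_def)
  then have GCk: "GC k N" using k by simp
  have MleN: "M \<le> N" using Mle by (simp add: N_def)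
  from GCk obtain c where c: "edge_coloring k N c" "nomono N c"
    unfolding GC_def by blast
  have A: "\<And>n c. n \<ge> M \<Longrightarrow> edge_coloring k n c \<Longrightarrow> \<exists>j\<in>{1..k}. 3 \<le> mp {0..<n} (color_class n c j)"
    using assms(2) unfolding admissible_def by blast
  obtain j where j: "3 \<le> mp {0..<N} (color_class N c j)"
    using A[OF MleN c(1)] by blast
  have "mp {0..<N} (color_class N c j) < 3" by (rule mp_small[OF c(2)])
  then show False using j by linarith
qed

end
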